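(* Let $f:[0,1]\times\mathbb{R}\to\mathbb{R}$ be continuous and suppose there exist positive constants $A,B$ with $A<\pi^2$ such that $|f(t,x)|\leqslant A|x|+B$ for all $t\in[0,1]$, $x\in\mathbb{R}$. Fix $y\in L^2(0,1)$. Then the functional $\varphi:\mathbb{X}\to\mathbb{R}$, $\varphi(x)=\frac12\int_0^1|\ddot x(t)-f(t,x(t))-y(t)|^2dt$, is coercive, i.e. $\varphi(x)\to\infty$ as $\|x\|_{\mathbb{X}}\to\infty$.
   Context: $\mathbb{X}=H^2(0,1)\cap H^1_0(0,1)$ (functions $x$ on $[0,1]$ with $x,\dot x$ absolutely continuous, $\ddot x\in L^2(0,1)$, $x(0)=x(1)=0$), with norm $\|x\|_{\mathbb{X}}=\|\ddot x\|_{L^2}$. *)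

theory Defs
  imports "HOL-Analysis.Analysis"
begin

definition L2_01 :: "(real \<Rightarrow> real) \<Rightarrow> bool" where
  "L2_01 g \<longleftrightarrow> set_borel_measurable lborel {0..1} g \<and>
                set_integrable lborel {0..1} (\<lambda>t. (g t)\<^sup>2)"

text \<open>x belongs to X = H^2(0,1) \<inter> H^1_0(0,1), with first derivative xd and second
  derivative xdd: xd and x are absolutely continuous on [0,1] (indefinite integrals of their
  derivatives), the second derivative is in L^2, and x(0) = x(1) = 0.\<close>
definition in_X :: "(real \<Rightarrow> real) \<Rightarrow> (real \<Rightarrow> real) \<Rightarrow> (real \<Rightarrow> real) \<Rightarrow> bool" where
  "in_X x xd xdd \<longleftrightarrow>
     L2_01 xdd \<and>
     (\<forall>t\<in>{0..1}. xd t = xd 0 + (LBINT s=0..t. xdd s)) \<and>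
     (\<forall>t\<in>{0..1}. x t = x 0 + (LBINT s=0..t. xd s)) \<and>
     x 0 = 0 \<and> x 1 = 0"

definition normX :: "(real \<Rightarrow> real) \<Rightarrow> real" where
  "normX xdd = sqrt (LBINT t=0..1. (xdd t)\<^sup>2)"

definition phi :: "(real \<Rightarrow> real \<Rightarrow> real) \<Rightarrow> (real \<Rightarrow> real) \<Rightarrow> (real \<Rightarrow> real) \<Rightarrow> (real \<Rightarrow> real) \<Rightarrow> real" where
  "phi f y x xdd = (1/2) * (LBINT t=0..1. \<bar>xdd t - f t (x t) - y t\<bar>\<^sup>2)"

end

theory Submission
  imports Defs
begin

lemma ibp_fubini:
  fixes g v u :: "real \<Rightarrow> real"
  assumes gI: "set_integrable lborel {0..1} g"
    and vc: "continuous_on {0..1} v"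
    and uc: "continuous_on {0..1} u"
    and vdef: "\<And>t. t \<in> {0..1} \<Longrightarrow> v t = v 0 + (LBINT s:{0..t}. g s)"
    and udef: "\<And>t. t \<in> {0..1} \<Longrightarrow> u t = u 0 + (LBINT s:{0..t}. v s)"
    and u0: "u 0 = 0" and u1: "u 1 = 0"
  shows "(LBINT t:{0..1}. v t * v t) = - (LBINT s:{0..1}. g s * u s)"
proof -
  define gi where "gi s = indicator {0..1} s * g s" for s :: real
  define vi where "vi t = indicator {0..1} t * v t" for t :: real
  have gi_int: "integrable lborel gi"
    using gI unfolding set_integrable_def gi_def by simp
  have vi_int: "integrable lborel vi"
    using borel_integrable_atLeastAtMost'[OF vc] unfolding set_integrable_def vi_def by simp
  have gi_m[measurable]: "gi \<in> borel_measurable lborel" using gi_int by auto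
  have vi_m[measurable]: "vi \<in> borel_measurable lborel" using vi_int by auto
  obtain C where C: "\<And>t. t \<in> {0..1} \<Longrightarrow> \<bar>v t\<bar> \<le> C"
    using compact_imp_bounded[OF compact_continuous_image[OF vc compact_Icc]]
    unfolding bounded_iff by fastforce
  define H where "H s t = (if s \<le> t then gi s * vi t else 0)" for s t :: real
  have H_m: "case_prod H \<in> borel_measurable (lborel \<Otimes>\<^sub>M lborel)"
    unfolding H_def by measurable
  have i1: "integrable lborel (\<lambda>s. LINT t|lborel. norm (H s t))"
  proof (rule Bochner_Integration.integrable_bound[where f="\<lambda>s. gi s * (LINT t|lborel. \<bar>vi t\<bar>)"])
    show "integrable lborel (\<lambda>s. gi s * (LINT t|lborel. \<bar>vi t\<bar>))"
      using gi_int by simp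
    show "(\<lambda>s. LINT t|lborel. norm (H s t)) \<in> borel_measurable lborel"
      using H_m by measurable
    show "AE x in lborel. norm (LINT y|lborel. norm (H x y)) \<le> norm (gi x * (LINT t|lborel. \<bar>vi t\<bar>))"
    proof (rule AE_I2)
      fix s :: real
      have "(LINT y|lborel. norm (H s y)) \<le> (LINT t|lborel. \<bar>gi s\<bar> * \<bar>vi t\<bar>)"
        by (rule integral_mono') (auto simp: H_def abs_mult vi_int)
      also have "\<dots> = \<bar>gi s\<bar> * (LINT t|lborel. \<bar>vi t\<bar>)" by simp
      finally show "norm (LINT y|lborel. norm (H s y)) \<le> norm (gi s * (LINT t|lborel. \<bar>vi t\<bar>))"
        by (simp add: abs_mult integral_nonneg_AE)
    qed
  qed
  have i2: "integrable lborel (\<lambda>t. H s t)" for s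
    by (rule Bochner_Integration.integrable_bound[where f="\<lambda>t. gi s * vi t"]) (auto simp: vi_int H_def)
  have Hint: "integrable (lborel \<Otimes>\<^sub>M lborel) (case_prod H)"
    by (rule lborel_pair.Fubini_integrable) (use i1 i2 H_m in auto)
  have F: "(LINT t|lborel. LINT s|lborel. H s t) = (LINT s|lborel. LINT t|lborel. H s t)"
    using lborel_pair.Fubini_integral[OF Hint] .
  have Hs: "H s t = vi t * (indicator {0..t} s * g s)" for s t
    by (auto simp: H_def gi_def vi_def split: split_indicator)
  have Ht: "H s t = gi s * (indicator {s..1} t * v t)" for s t
    by (auto simp: H_def gi_def vi_def split: split_indicator)
  have inner1: "(LINT s|lborel. H s t) = vi t * (v t - v 0)" for t
  proof -
    have "(LINT s|lborel. H s t) = vi t * (LBINT s:{0..t}. g s)"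
      unfolding Hs set_lebesgue_integral_def by simp
    also have "\<dots> = vi t * (v t - v 0)"
      using vdef[of t] by (cases "t \<in> {0..1}") (simp_all add: vi_def)
    finally show ?thesis .
  qed
  have vint: "(LBINT t:{a..b}. v t) = (LBINT t=a..b. v t)" if "a \<le> b" for a b
    by (rule interval_integral_Icc[OF that, symmetric])
  have tail: "(LBINT t:{s..1}. v t) = - u s" if "s \<in> {0..1}" for s
  proof -
    have ii: "interval_lebesgue_integrable lborel (ereal 0) (ereal 1) v"
      using interval_integrable_continuous_on[of 0 1 v] vc by simp
    have "(LBINT t=0..s. v t) + (LBINT t=s..1. v t) = (LBINT t=0..1. v t)"
      apply (rule interval_integral_sum)
      using that ii by (simp add: min_def max_def zero_ereal_def one_ereal_def)
    moreover have "u s = u 0 + (LBINT t=0..s. v t)" using udef[OF that] vint[of 0 s] that by (simp add: zero_ereal_def)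
    moreover have "u 1 = u 0 + (LBINT t=0..1. v t)" using udef[of 1] vint[of 0 1] by (simp add: zero_ereal_def one_ereal_def)
    ultimately show ?thesis using vint[of s 1] that u0 u1 by (simp add: zero_ereal_def one_ereal_def)
  qed
  have inner2: "(LINT t|lborel. H s t) = - (gi s * u s)" for s
  proof -
    have "(LINT t|lborel. H s t) = gi s * (LBINT t:{s..1}. v t)"
      unfolding Ht set_lebesgue_integral_def by simp
    also have "\<dots> = - (gi s * u s)"
      using tail[of s] by (cases "s \<in> {0..1}") (simp_all add: gi_def)
    finally show ?thesis .
  qed
  have vv_int: "integrable lborel (\<lambda>t. indicator {0..1} t * (v t * v t))"
    using borel_integrable_atLeastAtMost'[of 0 1 "\<lambda>t. v t * v t"] vc
    unfolding set_integrable_def by (auto intro!: continuous_intros)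
  have gu_int: "integrable lborel (\<lambda>s. gi s * u s)"
  proof -
    obtain D where D: "\<And>t. t \<in> {0..1} \<Longrightarrow> \<bar>u t\<bar> \<le> D"
      using compact_imp_bounded[OF compact_continuous_image[OF uc compact_Icc]]
      unfolding bounded_iff by fastforce
    have um: "(\<lambda>s. indicator {0..1} s * u s) \<in> borel_measurable lborel"
      using borel_integrable_atLeastAtMost'[OF uc] unfolding set_integrable_def by auto
    have eq: "gi s * u s = gi s * (indicator {0..1} s * u s)" for s
      by (auto simp: gi_def indicator_def)
    show ?thesis unfolding eq
      apply (rule Bochner_Integration.integrable_bound[where f="\<lambda>s. gi s * D"])
      using gi_int um apply simp_all
      apply (rule AE_I2)
      using D by (auto simp: gi_def abs_mult indicator_def intro!: mult_left_mono) (meson abs_ge_self order_trans)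
  qed
  have e1: "(\<lambda>t. vi t * (v t - v 0)) = (\<lambda>t. indicator {0..1} t * (v t * v t) - v 0 * vi t)"
    by (auto simp: vi_def algebra_simps fun_eq_iff)
  have "(LINT t|lborel. LINT s|lborel. H s t) = (LINT t|lborel. indicator {0..1} t * (v t * v t)) - v 0 * (LINT t|lborel. vi t)"
    unfolding inner1 e1 using vv_int vi_int by simp
  moreover have "(LINT t|lborel. vi t) = 0"
    using tail[of 0] u0 unfolding vi_def set_lebesgue_integral_def by simp
  moreover have "(LINT s|lborel. LINT t|lborel. H s t) = - (LINT s|lborel. gi s * u s)"
    unfolding inner2 by simp
  ultimately show ?thesis
    using F unfolding set_lebesgue_integral_def gi_def by (simp add: mult.assoc)
qed

lemma cot_lim:
  fixes u :: "real \<Rightarrow> real"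
  assumes du: "(u has_real_derivative d) (at c within S)"
    and uc: "u c = 0" and sc: "sin (pi * c) = 0" and cc: "cos (pi * c) \<noteq> 0"
  shows "((\<lambda>y. cos (pi * y) / sin (pi * y) * (u y)\<^sup>2) \<longlongrightarrow> 0) (at c within S)"
proof -
  have Q1: "((\<lambda>y. (u y - u c) / (y - c)) \<longlongrightarrow> d) (at c within S)"
    using du by (simp add: has_field_derivative_iff)
  have ds: "((\<lambda>y. sin (pi * y)) has_real_derivative pi * cos (pi * c)) (at c within S)"
    by (auto intro!: derivative_eq_intros)
  have Q2: "((\<lambda>y. (sin (pi * y) - sin (pi * c)) / (y - c)) \<longlongrightarrow> pi * cos (pi * c)) (at c within S)"
    using ds by (simp add: has_field_derivative_iff)
  have Q3: "((\<lambda>y. ((u y - u c) / (y - c)) / ((sin (pi * y) - sin (pi * c)) / (y - c))) \<longlongrightarrow> d / (pi * cos (pi * c))) (at c within S)"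
    by (rule tendsto_divide[OF Q1 Q2]) (use cc in simp)
  have Q4: "((\<lambda>y. u y / sin (pi * y)) \<longlongrightarrow> d / (pi * cos (pi * c))) (at c within S)"
  proof (rule Lim_transform_eventually[OF Q3])
    show "\<forall>\<^sub>F y in at c within S. (u y - u c) / (y - c) / ((sin (pi * y) - sin (pi * c)) / (y - c)) = u y / sin (pi * y)"
      unfolding eventually_at_filter
      by (rule always_eventually) (auto simp: uc sc)
  qed
  have Uc: "(u \<longlongrightarrow> 0) (at c within S)"
    using DERIV_continuous[OF du] uc by (simp add: continuous_within)
  have Cc: "((\<lambda>y. cos (pi * y)) \<longlongrightarrow> cos (pi * c)) (at c within S)"
    by (intro tendsto_intros)
  have "((\<lambda>y. cos (pi * y) * (u y / sin (pi * y)) * u y) \<longlongrightarrow> cos (pi * c) * (d / (pi * cos (pi * c))) * 0) (at c within S)"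
    by (intro tendsto_mult Cc Q4 Uc)
  then show ?thesis
    by (simp add: power2_eq_square mult.assoc)
qed

lemma wirtinger:
  fixes u v :: "real \<Rightarrow> real"
  assumes vc: "continuous_on {0..1} v"
    and ud: "\<And>t. t \<in> {0..1} \<Longrightarrow> (u has_real_derivative v t) (at t within {0..1})"
    and u0: "u 0 = 0" and u1: "u 1 = 0"
  shows "pi\<^sup>2 * (LBINT t:{0..1}. (u t)\<^sup>2) \<le> (LBINT t:{0..1}. (v t)\<^sup>2)"
proof -
  have uc: "continuous_on {0..1} u"
    unfolding continuous_on_eq_continuous_within using ud by (blast intro: DERIV_continuous)
  define w where "w t = (v t)\<^sup>2 - pi\<^sup>2 * (u t)\<^sup>2" for t
  have wc: "continuous_on {0..1} w"
    unfolding w_def by (intro continuous_intros vc uc)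
  define \<Phi> where "\<Phi> t = (LBINT s=0..t. w s)" for t :: real
  have d\<Phi>: "(\<Phi> has_real_derivative w t) (at t within {0..1})" if "t \<in> {0..1}" for t
    using interval_integral_FTC2[of 0 0 1 w t] wc that
    unfolding \<Phi>_def has_real_derivative_iff_has_vector_derivative by (simp add: zero_ereal_def)
  have \<Phi>c: "continuous_on {0..1} \<Phi>"
    unfolding continuous_on_eq_continuous_within using d\<Phi> by (blast intro: DERIV_continuous)
  define F where "F t = \<Phi> t - pi * (cos (pi * t) / sin (pi * t) * (u t)\<^sup>2)" for t
  have dF: "(F has_real_derivative (v t - pi * (cos (pi * t) / sin (pi * t)) * u t)\<^sup>2) (at t)"
    if "0 < t" "t < 1" for t
  proof -
    have at: "at t within {0..1} = at t" using that by (simp add: at_within_Icc_at)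
    have d1: "(\<Phi> has_real_derivative w t) (at t)" using d\<Phi>[of t] that at by simp
    have d2: "(u has_real_derivative v t) (at t)" using ud[of t] that at by simp
    have sn: "sin (pi * t) \<noteq> 0"
    proof -
      have "0 < sin (pi * t)" using that by (intro sin_gt_zero) auto
      then show ?thesis by simp
    qed
    show ?thesis
      unfolding F_def
      apply (rule DERIV_cong)
       apply (rule derivative_eq_intros d1 d2 refl sn)+
      using sn
      apply (simp add: w_def field_simps power2_eq_square)
      done
  qed
  have mono: "F a \<le> F b" if "0 < a" "a \<le> b" "b < 1" for a b
  proof (rule DERIV_nonneg_imp_nondecreasing[OF \<open>a \<le> b\<close>])
    fix x assume x: "a \<le> x" "x \<le> b"
    have "0 < x" "x < 1" using x that by auto
    then show "\<exists>y. (F has_real_derivative y) (at x) \<and> 0 \<le> y"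
      using dF[OF \<open>0 < x\<close> \<open>x < 1\<close>] zero_le_power2 by blast
  qed
  have lim0: "(F \<longlongrightarrow> 0) (at_right 0)"
  proof -
    have "(\<Phi> \<longlongrightarrow> \<Phi> 0) (at_right 0)" using continuous_on_Icc_at_rightD[OF \<Phi>c] by simp
    moreover have "\<Phi> 0 = 0" by (simp add: \<Phi>_def zero_ereal_def)
    moreover have "((\<lambda>y. cos (pi * y) / sin (pi * y) * (u y)\<^sup>2) \<longlongrightarrow> 0) (at 0 within {0..1})"
      by (rule cot_lim[OF ud[of 0]]) (auto simp: u0)
    ultimately have "((\<lambda>y. \<Phi> y - pi * (cos (pi * y) / sin (pi * y) * (u y)\<^sup>2)) \<longlongrightarrow> 0 - pi * 0) (at_right 0)"
      unfolding at_within_Icc_at_right[OF zero_less_one] by (intro tendsto_intros) auto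
    then show ?thesis unfolding F_def by simp
  qed
  have lim1: "(F \<longlongrightarrow> \<Phi> 1) (at_left 1)"
  proof -
    have "(\<Phi> \<longlongrightarrow> \<Phi> 1) (at_left 1)" using continuous_on_Icc_at_leftD[OF \<Phi>c] by simp
    moreover have "((\<lambda>y. cos (pi * y) / sin (pi * y) * (u y)\<^sup>2) \<longlongrightarrow> 0) (at 1 within {0..1})"
      by (rule cot_lim[OF ud[of 1]]) (auto simp: u1)
    ultimately have "((\<lambda>y. \<Phi> y - pi * (cos (pi * y) / sin (pi * y) * (u y)\<^sup>2)) \<longlongrightarrow> \<Phi> 1 - pi * 0) (at_left 1)"
      unfolding at_within_Icc_at_left[OF zero_less_one] by (intro tendsto_intros) auto
    then show ?thesis unfolding F_def by simp
  qed
  have Fb: "0 \<le> F b" if "0 < b" "b < 1" for b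
  proof (rule tendsto_le[OF _ tendsto_const lim0])
    show "at_right (0::real) \<noteq> bot" by simp
    show "\<forall>\<^sub>F x in at_right 0. F x \<le> F b"
      unfolding eventually_at_right_field using that mono by (intro exI[of _ b]) auto
  qed
  have P1: "0 \<le> \<Phi> 1"
  proof (rule tendsto_le[OF _ lim1 tendsto_const])
    show "at_left (1::real) \<noteq> bot" by simp
    show "\<forall>\<^sub>F x in at_left 1. 0 \<le> F x"
      unfolding eventually_at_left_field using Fb by (intro exI[of _ 0]) auto
  qed
  have iu: "set_integrable lborel {0..1} (\<lambda>t. (u t)\<^sup>2)"
    by (rule borel_integrable_atLeastAtMost') (intro continuous_intros uc)
  have iv: "set_integrable lborel {0..1} (\<lambda>t. (v t)\<^sup>2)"
    by (rule borel_integrable_atLeastAtMost') (intro continuous_intros vc)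
  have "\<Phi> 1 = (LBINT t:{0..1}. w t)"
    unfolding \<Phi>_def using interval_integral_Icc[of 0 1 w] by (simp add: zero_ereal_def one_ereal_def)
  also have "\<dots> = (LBINT t:{0..1}. (v t)\<^sup>2) - pi\<^sup>2 * (LBINT t:{0..1}. (u t)\<^sup>2)"
    unfolding w_def using iu iv by (simp add: set_integral_diff set_integral_mult_right set_integrable_mult_right)
  finally show ?thesis using P1 by simp
qed

lemma sq_bound_int:
  fixes h k :: "real \<Rightarrow> real"
  assumes hm: "set_borel_measurable lborel {0..1} h" and ki: "set_integrable lborel {0..1} k"
    and b: "\<And>t. t \<in> {0..1} \<Longrightarrow> \<bar>h t\<bar> \<le> k t"
  shows "set_integrable lborel {0..1} h"
  unfolding set_integrable_def
proof (rule Bochner_Integration.integrable_bound[where f="\<lambda>t. indicator {0..1} t *\<^sub>R k t"])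
  show "integrable lborel (\<lambda>t. indicator {0..1} t *\<^sub>R k t)"
    using ki unfolding set_integrable_def .
  show "(\<lambda>t. indicator {0..1} t *\<^sub>R h t) \<in> borel_measurable lborel"
    using hm unfolding set_borel_measurable_def .
  show "AE t in lborel. norm (indicator {0..1} t *\<^sub>R h t) \<le> norm (indicator {0..1} t *\<^sub>R k t)"
    using b by (intro AE_I2) (auto simp: indicator_def intro: order_trans[OF _ abs_ge_self])
qed

lemma sq_ab: "\<bar>z::real\<bar> \<le> 1 + z\<^sup>2"
proof -
  have "0 \<le> (\<bar>z\<bar> - 1)\<^sup>2" by simp
  then have "2 * \<bar>z\<bar> \<le> 1 + \<bar>z\<bar>\<^sup>2" by (simp add: power2_eq_square algebra_simps)
  then show ?thesis by simp
qed

lemma L2_int: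
  assumes "L2_01 y"
  shows "set_integrable lborel {0..1} y"
proof (rule sq_bound_int[where k="\<lambda>t. 1 + (y t)\<^sup>2"])
  show "set_borel_measurable lborel {0..1} y" using assms unfolding L2_01_def by simp
  have c: "set_integrable lborel {0..1::real} (\<lambda>t. 1::real)"
    by (rule borel_integrable_atLeastAtMost') simp
  show "set_integrable lborel {0..1} (\<lambda>t. 1 + (y t)\<^sup>2)"
    using assms c unfolding L2_01_def by (intro set_integral_add) auto
  fix t
  show "\<bar>y t\<bar> \<le> 1 + (y t)\<^sup>2" by (rule sq_ab)
qed

lemma poincare:
  assumes X: "in_X x xd xdd"
  shows "pi ^ 4 * (LBINT t:{0..1}. (x t)\<^sup>2) \<le> (LBINT t:{0..1}. (xdd t)\<^sup>2)"
    and "continuous_on {0..1} x"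
proof -
  have L2: "L2_01 xdd" and vdef0: "\<And>t. t \<in> {0..1} \<Longrightarrow> xd t = xd 0 + (LBINT s=0..t. xdd s)"
    and udef0: "\<And>t. t \<in> {0..1} \<Longrightarrow> x t = x 0 + (LBINT s=0..t. xd s)"
    and u0: "x 0 = 0" and u1: "x 1 = 0"
    using X unfolding in_X_def apply -
    apply blast+
    done
  have gI: "set_integrable lborel {0..1} xdd" using L2_int[OF L2] .
  have gsq: "set_integrable lborel {0..1} (\<lambda>t. (xdd t)\<^sup>2)" using L2 unfolding L2_01_def by simp
  have vdef: "xd t = xd 0 + (LBINT s:{0..t}. xdd s)" if "t \<in> {0..1}" for t
    using vdef0[OF that] interval_integral_Icc[of 0 t xdd] that by (simp add: zero_ereal_def)
  have udef: "x t = x 0 + (LBINT s:{0..t}. xd s)" if "t \<in> {0..1}" for t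
    using udef0[OF that] interval_integral_Icc[of 0 t xd] that by (simp add: zero_ereal_def)
  have vc: "continuous_on {0..1} xd"
  proof (rule continuous_on_eq)
    show "continuous_on {0..1} (\<lambda>t. xd 0 + integral {0..t} xdd)"
      by (intro continuous_intros indefinite_integral_continuous_1 set_borel_integral_eq_integral(1)[OF gI])
    fix t :: real assume t: "t \<in> {0..1}"
    have "set_integrable lborel {0..t} xdd"
      by (rule set_integrable_subset[OF gI]) (use t in auto)
    then show "xd 0 + integral {0..t} xdd = xd t"
      using vdef[OF t] set_borel_integral_eq_integral(2) by metis
  qed
  have ud: "(x has_real_derivative xd t) (at t within {0..1})" if t: "t \<in> {0..1}" for t
  proof -
    have "((\<lambda>s. LBINT y=0..s. xd y) has_vector_derivative xd t) (at t within {0..1})"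
      using interval_integral_FTC2[of 0 0 1 xd t] vc t by (simp add: zero_ereal_def)
    then have "((\<lambda>s. x 0 + (LBINT y=0..s. xd y)) has_vector_derivative xd t) (at t within {0..1})"
      by (auto intro!: derivative_eq_intros)
    then have "(x has_vector_derivative xd t) (at t within {0..1})"
      by (rule has_vector_derivative_transform[OF t, rotated]) (use udef0 in blast)
    then show ?thesis by (simp add: has_real_derivative_iff_has_vector_derivative)
  qed
  show uc: "continuous_on {0..1} x"
    unfolding continuous_on_eq_continuous_within using ud by (blast intro: DERIV_continuous)
  have ibp: "(LBINT t:{0..1}. xd t * xd t) = - (LBINT s:{0..1}. xdd s * x s)"
    by (rule ibp_fubini[OF gI vc uc vdef udef u0 u1])
  have wirt: "pi\<^sup>2 * (LBINT t:{0..1}. (x t)\<^sup>2) \<le> (LBINT t:{0..1}. (xd t)\<^sup>2)"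
    by (rule wirtinger[OF vc ud u0 u1])
  have usq: "set_integrable lborel {0..1} (\<lambda>t. (x t)\<^sup>2)"
    by (rule borel_integrable_atLeastAtMost') (intro continuous_intros uc)
  define up where "up t = ((xdd t)\<^sup>2 / pi\<^sup>2 + pi\<^sup>2 * (x t)\<^sup>2) / 2" for t
  have pw: "- (xdd t * x t) \<le> up t" for t
  proof -
    have "0 \<le> (xdd t / pi + pi * x t)\<^sup>2" by simp
    then show ?thesis unfolding up_def by (simp add: power2_eq_square field_simps)
  qed
  have upI: "set_integrable lborel {0..1} up"
    unfolding up_def using gsq usq
    by (intro set_integral_add set_integrable_mult_right set_integrable_divide) auto
  have upv: "(LBINT t:{0..1}. up t) = ((LBINT t:{0..1}. (xdd t)\<^sup>2) / pi\<^sup>2 + pi\<^sup>2 * (LBINT t:{0..1}. (x t)\<^sup>2)) / 2"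
    unfolding up_def using gsq usq
    by (simp add: set_integral_add set_integrable_mult_right set_integrable_divide set_integral_mult_right set_integral_divide_zero)
  have "(LBINT t:{0..1}. (xd t)\<^sup>2) = (LBINT s:{0..1}. - (xdd s * x s))"
    using ibp unfolding set_lebesgue_integral_def by (simp add: power2_eq_square)
  also have "\<dots> \<le> (LBINT t:{0..1}. up t)"
    unfolding set_lebesgue_integral_def
    apply (rule integral_mono')
    using upI unfolding set_integrable_def apply simp
    using pw apply (simp add: indicator_def)
    apply (simp add: indicator_def up_def)
    done
  finally have "pi\<^sup>2 * (LBINT t:{0..1}. (x t)\<^sup>2) \<le> ((LBINT t:{0..1}. (xdd t)\<^sup>2) / pi\<^sup>2 + pi\<^sup>2 * (LBINT t:{0..1}. (x t)\<^sup>2)) / 2"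
    using wirt upv by simp
  then show "pi ^ 4 * (LBINT t:{0..1}. (x t)\<^sup>2) \<le> (LBINT t:{0..1}. (xdd t)\<^sup>2)"
    by (simp add: field_simps power_numeral_reduce)
qed

lemma pw1:
  fixes e g w :: real
  shows "e * (1 - e) * g\<^sup>2 - (1 - e) * w\<^sup>2 \<le> e * (g - w)\<^sup>2"
proof -
  have "0 \<le> (e * g - w)\<^sup>2" by simp
  moreover have "e * (g - w)\<^sup>2 - (e * (1 - e) * g\<^sup>2 - (1 - e) * w\<^sup>2) = (e * g - w)\<^sup>2"
    by (simp add: power2_eq_square algebra_simps)
  ultimately show ?thesis by linarith
qed

lemma pw2:
  fixes a p q :: real
  assumes "0 < a" "a < 1"
  shows "(p + q)\<^sup>2 \<le> p\<^sup>2 / a + q\<^sup>2 / (1 - a)"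
proof -
  have "0 \<le> ((1 - a) * p - a * q)\<^sup>2 / (a * (1 - a))" using assms by simp
  moreover have "p\<^sup>2 / a + q\<^sup>2 / (1 - a) - (p + q)\<^sup>2 = ((1 - a) * p - a * q)\<^sup>2 / (a * (1 - a))"
    using assms by (simp add: field_simps power2_eq_square)
  ultimately show ?thesis by linarith
qed

theorem lemma4:
  fixes f :: "real \<Rightarrow> real \<Rightarrow> real" and y :: "real \<Rightarrow> real" and A B :: real
  assumes "continuous_on ({0..1} \<times> UNIV) (\<lambda>(t, x). f t x)"
    and "A > 0" and "B > 0" and "A < pi\<^sup>2"
    and "\<And>t x. t \<in> {0..1} \<Longrightarrow> \<bar>f t x\<bar> \<le> A * \<bar>x\<bar> + B"
    and "L2_01 y"
  shows "\<forall>M. \<exists>R. \<forall>x xd xdd. in_X x xd xdd \<and> normX xdd \<ge> R \<longrightarrow> phi f y x xdd \<ge> M"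
proof
  fix M :: real
  note fc = assms(1) and A0 = assms(2) and B0 = assms(3) and Api = assms(4) and fb = assms(5)
    and yL = assms(6)
  define a where "a = A / pi\<^sup>2"
  have a0: "0 < a" "a < 1" using A0 Api by (auto simp: a_def field_simps)
  define e where "e = (1 + a) / 2"
  have e0: "0 < e" "e < 1" "a < e" using a0 by (auto simp: e_def)
  define q where "q t = (B + \<bar>y t\<bar>)\<^sup>2" for t
  define Q where "Q = (LBINT t:{0..1}. q t)"
  define c where "c = (1 - e) * (e - a)"
  have c0: "0 < c" using e0 by (simp add: c_def)
  define C0 where "C0 = (1 - e) * Q / (1 - a)"
  define R where "R = sqrt (max 0 ((2 * e * M + C0) / c))"
  have yI: "set_integrable lborel {0..1} y" using L2_int[OF yL] .
  have ysq: "set_integrable lborel {0..1} (\<lambda>t. (y t)\<^sup>2)" using yL unfolding L2_01_def by simp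
  have cI: "set_integrable lborel {0..1::real} (\<lambda>t. B\<^sup>2)"
    by (rule borel_integrable_atLeastAtMost') simp
  have qI: "set_integrable lborel {0..1} q"
  proof -
    have "set_integrable lborel {0..1} (\<lambda>t. B\<^sup>2 + 2 * B * \<bar>y t\<bar> + (y t)\<^sup>2)"
      using cI ysq set_integrable_abs[OF yI]
      by (intro set_integral_add set_integrable_mult_right) auto
    moreover have "(\<lambda>t. B\<^sup>2 + 2 * B * \<bar>y t\<bar> + (y t)\<^sup>2) = q"
      by (auto simp: q_def power2_eq_square algebra_simps fun_eq_iff)
    ultimately show ?thesis by simp
  qed
  show "\<exists>R. \<forall>x xd xdd. in_X x xd xdd \<and> normX xdd \<ge> R \<longrightarrow> phi f y x xdd \<ge> M"
  proof (intro exI[of _ R] allI impI)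
    fix x xd xdd assume H: "in_X x xd xdd \<and> R \<le> normX xdd"
    then have X: "in_X x xd xdd" and RN: "R \<le> normX xdd" by auto
    have P: "pi ^ 4 * (LBINT t:{0..1}. (x t)\<^sup>2) \<le> (LBINT t:{0..1}. (xdd t)\<^sup>2)"
      and uc: "continuous_on {0..1} x" using poincare[OF X] by auto
    have L2: "L2_01 xdd" using X unfolding in_X_def by blast
    have gm: "set_borel_measurable lborel {0..1} xdd" and gsq: "set_integrable lborel {0..1} (\<lambda>t. (xdd t)\<^sup>2)"
      using L2 unfolding L2_01_def by auto
    have ym: "set_borel_measurable lborel {0..1} y" using yL unfolding L2_01_def by auto
    have Fc: "continuous_on {0..1} (\<lambda>t. f t (x t))"
    proof -
      have "continuous_on {0..1} ((\<lambda>(t, x). f t x) \<circ> (\<lambda>t. (t, x t)))"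
        by (rule continuous_on_compose[OF _ continuous_on_subset[OF fc]])
           (auto intro!: continuous_intros uc)
      then show ?thesis by (simp add: o_def)
    qed
    have Fm: "set_borel_measurable lborel {0..1} (\<lambda>t. f t (x t))"
      unfolding set_borel_measurable_def
      using borel_measurable_continuous_on_indicator[OF _ Fc] by simp
    define h where "h t = (xdd t - f t (x t) - y t)\<^sup>2" for t
    have hm: "set_borel_measurable lborel {0..1} h"
    proof -
      have m1: "(\<lambda>t. indicator {0..1} t *\<^sub>R xdd t) \<in> borel_measurable lborel"
        using gm unfolding set_borel_measurable_def .
      have m2: "(\<lambda>t. indicator {0..1} t *\<^sub>R f t (x t)) \<in> borel_measurable lborel"
        using Fm unfolding set_borel_measurable_def .
      have m3: "(\<lambda>t. indicator {0..1} t *\<^sub>R y t) \<in> borel_measurable lborel"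
        using ym unfolding set_borel_measurable_def .
      have "(\<lambda>t. (indicator {0..1} t *\<^sub>R xdd t - indicator {0..1} t *\<^sub>R f t (x t) - indicator {0..1} t *\<^sub>R y t)\<^sup>2) \<in> borel_measurable lborel"
        using m1 m2 m3 by measurable
      moreover have "(\<lambda>t. (indicator {0..1} t *\<^sub>R xdd t - indicator {0..1} t *\<^sub>R f t (x t) - indicator {0..1} t *\<^sub>R y t)\<^sup>2)
          = (\<lambda>t. indicator {0..1} t *\<^sub>R h t)"
        by (auto simp: h_def indicator_def fun_eq_iff)
      ultimately show ?thesis unfolding set_borel_measurable_def by simp
    qed
    define k where "k t = e * (1 - e) * (xdd t)\<^sup>2 - (1 - e) * (A * pi\<^sup>2 * (x t)\<^sup>2 + q t / (1 - a))" for t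
    define kk where "kk t = 2 * (xdd t)\<^sup>2 + 2 * (A * pi\<^sup>2 * (x t)\<^sup>2 + q t / (1 - a))" for t
    have wb: "(f t (x t) + y t)\<^sup>2 \<le> A * pi\<^sup>2 * (x t)\<^sup>2 + q t / (1 - a)" if t: "t \<in> {0..1}" for t
    proof -
      have "\<bar>f t (x t) + y t\<bar> \<le> A * \<bar>x t\<bar> + (B + \<bar>y t\<bar>)"
        using fb[OF t, of "x t"] by linarith
      then have "(f t (x t) + y t)\<^sup>2 \<le> (A * \<bar>x t\<bar> + (B + \<bar>y t\<bar>))\<^sup>2"
        by (metis abs_ge_zero abs_le_square_iff abs_of_nonneg order_trans)
      also have "\<dots> \<le> (A * \<bar>x t\<bar>)\<^sup>2 / a + (B + \<bar>y t\<bar>)\<^sup>2 / (1 - a)"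
        by (rule pw2[OF a0])
      also have "(A * \<bar>x t\<bar>)\<^sup>2 / a = A * pi\<^sup>2 * (x t)\<^sup>2"
        using A0 by (simp add: a_def power2_eq_square field_simps)
      finally show ?thesis by (simp add: q_def)
    qed
    have usq: "set_integrable lborel {0..1} (\<lambda>t. (x t)\<^sup>2)"
      by (rule borel_integrable_atLeastAtMost') (intro continuous_intros uc)
    have kI: "set_integrable lborel {0..1} k"
      unfolding k_def using gsq qI usq
      by (intro set_integral_diff set_integral_add set_integrable_mult_right set_integrable_divide) auto
    have kkI: "set_integrable lborel {0..1} kk"
      unfolding kk_def using gsq qI usq
      by (intro set_integral_add set_integrable_mult_right set_integrable_divide) auto
    have hI: "set_integrable lborel {0..1} h"
    proof (rule sq_bound_int[OF hm kkI])
      fix t :: real assume t: "t \<in> {0..1}"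
      have "0 \<le> (xdd t + (f t (x t) + y t))\<^sup>2" by simp
      then have "h t \<le> 2 * (xdd t)\<^sup>2 + 2 * (f t (x t) + y t)\<^sup>2"
        unfolding h_def by (simp add: power2_eq_square algebra_simps)
      also have "\<dots> \<le> kk t" unfolding kk_def using wb[OF t] by (intro add_left_mono mult_left_mono) auto
      finally show "\<bar>h t\<bar> \<le> kk t" by (simp add: h_def)
    qed
    have pt: "k t \<le> e * h t" if t: "t \<in> {0..1}" for t
    proof -
      have "k t \<le> e * (1 - e) * (xdd t)\<^sup>2 - (1 - e) * (f t (x t) + y t)\<^sup>2"
        unfolding k_def using wb[OF t] e0 by (intro diff_left_mono mult_left_mono) auto
      also have "\<dots> \<le> e * (xdd t - (f t (x t) + y t))\<^sup>2" by (rule pw1)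
      finally show ?thesis by (simp add: h_def algebra_simps)
    qed
    define G where "G = (LBINT t:{0..1}. (xdd t)\<^sup>2)"
    define U where "U = (LBINT t:{0..1}. (x t)\<^sup>2)"
    define I where "I = (LBINT t:{0..1}. h t)"
    have Ik: "(LBINT t:{0..1}. k t) \<le> e * I"
      unfolding I_def set_integral_mult_right[symmetric]
      by (rule set_integral_mono[OF kI set_integrable_mult_right[OF hI] pt])
    have kval: "(LBINT t:{0..1}. k t) = e * (1 - e) * G - (1 - e) * (A * pi\<^sup>2 * U + Q / (1 - a))"
      unfolding k_def G_def U_def Q_def using gsq qI usq
      by (simp add: set_integral_diff set_integral_add set_integrable_mult_right set_integrable_divide
          set_integral_mult_right set_integral_divide_zero)
    have phiI: "phi f y x xdd = I / 2"
      unfolding phi_def I_def h_def using interval_integral_Icc[of 0 1 "\<lambda>t. (xdd t - f t (x t) - y t)\<^sup>2"]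
      by (simp add: zero_ereal_def one_ereal_def)
    have nG: "normX xdd = sqrt G"
      unfolding normX_def G_def using interval_integral_Icc[of 0 1 "\<lambda>t. (xdd t)\<^sup>2"]
      by (simp add: zero_ereal_def one_ereal_def)
    have PU: "pi ^ 4 * U \<le> G" using P unfolding U_def G_def .
    have AU: "A * pi\<^sup>2 * U \<le> a * G"
    proof -
      have "A * pi\<^sup>2 * U = a * (pi ^ 4 * U)" by (simp add: a_def power2_eq_square power4_eq_xxxx)
      also have "\<dots> \<le> a * G" using PU a0 by (intro mult_left_mono) auto
      finally show ?thesis .
    qed
    have low: "c * G - C0 \<le> 2 * e * phi f y x xdd"
    proof -
      have "c * G - C0 = e * (1 - e) * G - (1 - e) * (a * G + Q / (1 - a))"
        unfolding c_def C0_def using a0 by (simp add: field_simps)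
      also have "\<dots> \<le> e * (1 - e) * G - (1 - e) * (A * pi\<^sup>2 * U + Q / (1 - a))"
        using AU e0 by (intro diff_left_mono mult_left_mono) auto
      also have "\<dots> \<le> e * I" using Ik kval by simp
      also have "\<dots> = 2 * e * phi f y x xdd" using phiI by simp
      finally show ?thesis .
    qed
    have G0: "R\<^sup>2 \<le> G"
    proof -
      have R0: "0 \<le> R" unfolding R_def by simp
      then have "0 \<le> sqrt G" using RN nG by linarith
      then have "0 \<le> G" by simp
      have "R\<^sup>2 \<le> (sqrt G)\<^sup>2" using RN nG R0 by (intro power_mono) auto
      then show ?thesis using \<open>0 \<le> G\<close> by simp
    qed
    have "(2 * e * M + C0) / c \<le> R\<^sup>2" unfolding R_def by simp
    then have "(2 * e * M + C0) / c \<le> G" using G0 by linarith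
    then have "2 * e * M + C0 \<le> c * G" using c0 by (simp add: field_simps)
    then have "2 * e * M \<le> 2 * e * phi f y x xdd" using low by linarith
    then show "M \<le> phi f y x xdd" using e0 by simp
  qed
qed

end
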